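(* Consider a cellular network with $n$ base stations $\mathcal{N}=\{1,\dots,n\}$, base station $i$ serving a nonempty set $\mathcal{J}_i$ of users (pairwise disjoint), channel gains $g_{kj}>0$, noise power $\sigma^2>0$, and $$f_i(\mathbf{x};\mathbf{r},\mathbf{p})=\sum_{j\in\mathcal{J}_i}\frac{r_{ij}}{\log\Big(1+\frac{p_i g_{ij}}{\sum_{k\ne i} p_k g_{kj} x_k+\sigma^2}\Big)}.$$ Let $\mathbf{r}>\mathbf{0}$ be a satisfiable rate vector and suppose the load $\mathbf{x}$ is implementable with power $\mathbf{p}$ and rate $\mathbf{r}$, i.e., $\mathbf{x}=\mathbf{f}(\mathbf{x};\mathbf{r},\mathbf{p})$. Then, for any norm $\|\cdot\|$ on $\mathbb{R}^n$, there exists $\delta>0$ such that any load vector $\mathbf{x}'$ with $\|\mathbf{x}'-\mathbf{x}\|\le\delta$ is implementable. Moreover, the implementable load region $\mathcal{L}=\{\mathbf{x}\ge\mathbf{0}:\ \mathbf{x}=\mathbf{f}(\mathbf{x};\mathbf{r},\mathbf{p})\ \text{for some}\ \mathbf{p}\ge\mathbf{0}\}$ is open.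
   Context: Vector inequalities are componentwise; $\log$ is natural logarithm. A rate vector $\mathbf{r}$ is satisfiable if $\rho(\mathbf{\Lambda}(\mathbf{r}))<1$, where $\rho$ is the spectral radius and $\mathbf{\Lambda}(\mathbf{r})$ has entries $\lambda_{ii}=0$ and $\lambda_{ik}=\sum_{j\in\mathcal{J}_i}g_{kj}r_{ij}/g_{ij}$ for $i\ne k$. Given satisfiable $\mathbf{r}$, a load $\mathbf{x}$ is implementable if there exists a power vector $\mathbf{p}$ with $\mathbf{x}=\mathbf{f}(\mathbf{x};\mathbf{r},\mathbf{p})$. *)

theory Defs
  imports "HOL-Analysis.Analysis"
begin

text \<open>Base stations are indexed by a finite type 'n (so loads, powers live in real^'n),
users by a type 'u; J i is the set of users served by base station i,
g k j the channel gain from base station k to user j, r i j the rate of user j at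
base station i, sigma2 the noise power.\<close>

definition cplx_eigenvalues :: "real^'n^'n \<Rightarrow> complex set" where
  "cplx_eigenvalues A = {l. \<exists>v :: complex^'n. v \<noteq> 0 \<and>
      (\<chi> i k. complex_of_real (A $ i $ k)) *v v = l *s v}"

definition spectral_radius :: "real^'n^'n \<Rightarrow> real" where
  "spectral_radius A = Max (cmod ` cplx_eigenvalues A)"

definition Lambda_mat :: "('n::finite \<Rightarrow> 'u set) \<Rightarrow> ('n \<Rightarrow> 'u \<Rightarrow> real) \<Rightarrow> ('n \<Rightarrow> 'u \<Rightarrow> real) \<Rightarrow> real^'n^'n" where
  "Lambda_mat J g r = (\<chi> i k. if i = k then 0 else (\<Sum>j\<in>J i. g k j * r i j / g i j))"

definition satisfiable :: "('n::finite \<Rightarrow> 'u set) \<Rightarrow> ('n \<Rightarrow> 'u \<Rightarrow> real) \<Rightarrow> ('n \<Rightarrow> 'u \<Rightarrow> real) \<Rightarrow> bool" where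
  "satisfiable J g r \<longleftrightarrow> spectral_radius (Lambda_mat J g r) < 1"

definition load_map :: "('n::finite \<Rightarrow> 'u set) \<Rightarrow> ('n \<Rightarrow> 'u \<Rightarrow> real) \<Rightarrow> real
    \<Rightarrow> real^'n \<Rightarrow> ('n \<Rightarrow> 'u \<Rightarrow> real) \<Rightarrow> real^'n \<Rightarrow> real^'n" where
  "load_map J g sigma2 x r p = (\<chi> i. \<Sum>j\<in>J i. r i j /
      ln (1 + p $ i * g i j / ((\<Sum>k\<in>UNIV - {i}. p $ k * g k j * x $ k) + sigma2)))"

text \<open>A zero power p_i makes f_i infinite in the paper, so the admissible powers are
the strictly positive ones (this avoids Isabelle's convention x/0 = 0).\<close>
definition implementable :: "('n::finite \<Rightarrow> 'u set) \<Rightarrow> ('n \<Rightarrow> 'u \<Rightarrow> real) \<Rightarrow> real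
    \<Rightarrow> ('n \<Rightarrow> 'u \<Rightarrow> real) \<Rightarrow> real^'n \<Rightarrow> bool" where
  "implementable J g sigma2 r x \<longleftrightarrow> (\<forall>i. 0 \<le> x $ i) \<and>
      (\<exists>p. (\<forall>i. 0 < p $ i) \<and> x = load_map J g sigma2 x r p)"

definition is_norm :: "(real^'n \<Rightarrow> real) \<Rightarrow> bool" where
  "is_norm N \<longleftrightarrow> (\<forall>x. N x = 0 \<longleftrightarrow> x = 0) \<and> (\<forall>x y. N (x + y) \<le> N x + N y)
      \<and> (\<forall>c x. N (c *\<^sub>R x) = \<bar>c\<bar> * N x)"

end

theory Submission
  imports Defs
begin


lemma is_norm_sum:
  assumes N: "is_norm N" and "finite A"
  shows "N (\<Sum>i\<in>A. f i) \<le> (\<Sum>i\<in>A. N (f i))"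
  using assms(2)
proof (induction A rule: finite_induct)
  case empty
  have "N 0 = 0" using N unfolding is_norm_def by blast
  then show ?case by simp
next
  case (insert a A)
  then show ?case using N unfolding is_norm_def
    by (simp add: sum.insert) (meson add_left_mono order_trans)
qed

lemma is_norm_lower:
  fixes N :: "real^'n \<Rightarrow> real"
  assumes N: "is_norm N"
  shows "\<exists>m>0. \<forall>v. m * norm v \<le> N v"
proof -
  have N0: "\<And>x. N x = 0 \<longleftrightarrow> x = 0" and Nt: "\<And>x y. N (x+y) \<le> N x + N y"
    and Ns: "\<And>c x. N (c *\<^sub>R x) = \<bar>c\<bar> * N x" using N unfolding is_norm_def by auto
  have Nneg: "N (- v) = N v" for v using Ns[of "-1" v] by simp
  have Nnn: "0 \<le> N v" for v using Nt[of v "-v"] N0[of 0] Nneg[of v] by simp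
  define K where "K = (\<Sum>i\<in>UNIV. N (axis i (1::real)))"
  have up: "N v \<le> K * norm v" for v :: "real^'n"
  proof -
    have "N v = N (\<Sum>i\<in>UNIV. v$i *\<^sub>R axis i 1)"
      using basis_expansion[of v] by (simp add: scalar_mult_eq_scaleR)
    also have "\<dots> \<le> (\<Sum>i\<in>UNIV. N (v$i *\<^sub>R axis i 1))" by (rule is_norm_sum[OF N]) simp
    also have "\<dots> = (\<Sum>i\<in>UNIV. \<bar>v$i\<bar> * N (axis i 1))" by (simp add: Ns)
    also have "\<dots> \<le> (\<Sum>i\<in>UNIV. norm v * N (axis i 1))"
      by (rule sum_mono, rule mult_right_mono[OF component_le_norm_cart Nnn])
    also have "\<dots> = K * norm v" by (simp add: K_def sum_distrib_left mult.commute)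
    finally show ?thesis .
  qed
  have K0: "0 \<le> K" unfolding K_def by (rule sum_nonneg) (simp add: Nnn)
  have lip: "K-lipschitz_on UNIV N"
  proof (rule lipschitz_onI)
    fix u v :: "real^'n"
    have "N u \<le> N (u - v) + N v" using Nt[of "u-v" v] by simp
    moreover have "N v \<le> N (v - u) + N u" using Nt[of "v-u" u] by simp
    moreover have "N (v - u) = N (u - v)" using Nneg[of "u-v"] by simp
    ultimately have "\<bar>N u - N v\<bar> \<le> N (u - v)" by linarith
    also have "\<dots> \<le> K * norm (u - v)" by (rule up)
    finally show "dist (N u) (N v) \<le> K * dist u v" by (simp add: dist_norm dist_real_def)
  qed (rule K0)
  have cont: "continuous_on (sphere 0 1) N"
    using lipschitz_on_continuous_on[OF lip] continuous_on_subset by blast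
  obtain i0 :: 'n where True by simp
  have ne: "sphere (0::real^'n) 1 \<noteq> {}"
    using norm_axis_1[of i0] by (metis mem_sphere_0 empty_iff)
  obtain z where z: "z \<in> sphere 0 1" and zmin: "\<And>w. w \<in> sphere 0 1 \<Longrightarrow> N z \<le> N w"
    using continuous_attains_inf[OF compact_sphere ne cont] by blast
  have zn: "z \<noteq> 0" using z by auto
  have m0: "N z > 0" using N0[of z] zn Nnn[of z] by linarith
  show ?thesis
  proof (intro exI[of _ "N z"] conjI allI m0)
    fix v :: "real^'n"
    show "N z * norm v \<le> N v"
    proof (cases "v = 0")
      case True then show ?thesis using Nnn[of 0] by simp
    next
      case False
      have "(inverse (norm v)) *\<^sub>R v \<in> sphere 0 1" using False by (simp add: norm_scaleR)
      hence "N z \<le> N (inverse (norm v) *\<^sub>R v)" by (rule zmin)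
      also have "\<dots> = N v / norm v" by (simp add: Ns divide_inverse mult.commute)
      finally show ?thesis using False by (simp add: field_simps)
    qed
  qed
qed


lemma term_dec:
  fixes r u u' :: real
  assumes "0 < r" "0 < u" "u < u'"
  shows "r / ln (1 + u') < r / ln (1 + u)"
proof -
  have "0 < ln (1 + u)" using assms by simp
  moreover have "ln (1 + u) < ln (1 + u')" using assms by simp
  ultimately show ?thesis using assms by (simp add: divide_strict_left_mono)
qed

lemma term_dec_le:
  fixes r u u' :: real
  assumes "0 \<le> r" "0 < u" "u \<le> u'"
  shows "r / ln (1 + u') \<le> r / ln (1 + u)"
proof -
  have "0 < ln (1 + u)" using assms by simp
  moreover have "ln (1 + u) \<le> ln (1 + u')" using assms by simp
  ultimately show ?thesis using assms by (simp add: divide_left_mono)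
qed

locale net =
  fixes J :: "'n::finite \<Rightarrow> 'u set" and g r :: "'n \<Rightarrow> 'u \<Rightarrow> real" and s :: real
  assumes J_fin: "finite (J i)" and J_ne: "J i \<noteq> {}" and g_pos: "0 < g k j"
    and s_pos: "0 < s" and r_pos: "j \<in> J i \<Longrightarrow> 0 < r i j"
begin

definition D :: "real^'n \<Rightarrow> real^'n \<Rightarrow> 'n \<Rightarrow> 'u \<Rightarrow> real" where
  "D y q i j = (\<Sum>k\<in>UNIV-{i}. q$k * g k j * y$k) + s"

definition G :: "real^'n \<Rightarrow> real^'n \<Rightarrow> 'n \<Rightarrow> real \<Rightarrow> real" where
  "G y q i t = (\<Sum>j\<in>J i. r i j / ln (1 + t * g i j / D y q i j))"

lemma load_map_G: "load_map J g s y r q $ i = G y q i (q$i)"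
  by (simp add: load_map_def G_def D_def)

lemma D_pos: "(\<forall>k. 0 \<le> y$k) \<Longrightarrow> (\<forall>k. 0 \<le> q$k) \<Longrightarrow> 0 < D y q i j"
proof -
  assume a: "\<forall>k. 0 \<le> y$k" "\<forall>k. 0 \<le> q$k"
  have "0 \<le> (\<Sum>k\<in>UNIV-{i}. q$k * g k j * y$k)"
    using a g_pos by (intro sum_nonneg mult_nonneg_nonneg) (auto simp: less_imp_le)
  then show ?thesis unfolding D_def using s_pos by simp
qed

lemma D_mono: "(\<forall>k. 0 \<le> y$k) \<Longrightarrow> (\<forall>k. q$k \<le> q'$k) \<Longrightarrow> D y q i j \<le> D y q' i j"
  unfolding D_def using g_pos
  by (intro add_right_mono sum_mono mult_right_mono) (auto intro: less_imp_le)

lemma G_pos: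
  assumes "0 < t" "\<And>j. 0 < D y q i j"
  shows "0 < G y q i t"
  unfolding G_def
proof (rule sum_pos[OF J_fin J_ne])
  fix j assume "j \<in> J i"
  have "0 < t * g i j / D y q i j" using assms g_pos by simp
  then show "0 < r i j / ln (1 + t * g i j / D y q i j)" using r_pos[OF \<open>j \<in> J i\<close>] by simp
qed

lemma G_strict:
  assumes "0 < t" "t < t'" "\<And>j. 0 < D y q i j"
  shows "G y q i t' < G y q i t"
  unfolding G_def
proof (rule sum_strict_mono[OF J_fin J_ne])
  fix j assume "j \<in> J i"
  show "r i j / ln (1 + t' * g i j / D y q i j) < r i j / ln (1 + t * g i j / D y q i j)"
    using assms g_pos[of i j] r_pos[OF \<open>j \<in> J i\<close>] assms(3)[of j]
    by (intro term_dec) (auto simp: divide_strict_right_mono)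
qed

lemma G_anti:
  assumes "0 < t" "t \<le> t'" "\<And>j. 0 < D y q i j"
  shows "G y q i t' \<le> G y q i t"
proof (cases "t = t'")
  case False
  then have "t < t'" using assms(2) by simp
  then show ?thesis using G_strict[OF assms(1) _ assms(3)] by (simp add: less_imp_le)
qed simp

lemma G_mono_q:
  assumes "0 < t" "\<forall>k. 0 \<le> y$k" "\<forall>k. 0 \<le> q$k" "\<forall>k. q$k \<le> q'$k"
  shows "G y q i t \<le> G y q' i t"
  unfolding G_def
proof (rule sum_mono)
  fix j assume j: "j \<in> J i"
  have d: "0 < D y q i j" using D_pos assms by blast
  have dd: "D y q i j \<le> D y q' i j" using D_mono assms by blast
  have "0 < t * g i j" using assms g_pos by simp
  then have "t * g i j / D y q' i j \<le> t * g i j / D y q i j"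
    using d dd by (simp add: divide_left_mono)
  moreover have "0 < t * g i j / D y q' i j" using \<open>0 < t * g i j\<close> d dd by simp
  ultimately show "r i j / ln (1 + t * g i j / D y q i j) \<le> r i j / ln (1 + t * g i j / D y q' i j)"
    using r_pos[OF j] by (intro term_dec_le) auto
qed

lemma G_cont:
  assumes "0 < a" "\<And>j. 0 < D y q i j"
  shows "continuous_on {a..b} (G y q i)"
  unfolding G_def
proof (intro continuous_intros ballI)
  fix j t assume "t \<in> {a..b}"
  then have p: "0 < t * g i j / D y q i j" using assms g_pos[of i j] assms(2)[of j] by simp
  show "D y q i j \<noteq> 0" using assms(2)[of j] by simp
  show "1 + t * g i j / D y q i j \<noteq> 0" using p by simp
  have "0 < ln (1 + t * g i j / D y q i j)" using p by simp
  then show "ln (1 + t * g i j / D y q i j) \<noteq> 0" by linarith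
qed

lemma G_exists:
  assumes c: "0 < c" and Dp: "\<And>j. 0 < D y q i j"
  shows "\<exists>t>0. G y q i t = c"
proof -
  obtain j0 where j0: "j0 \<in> J i" using J_ne by blast
  define t1 where "t1 = r i j0 * D y q i j0 / (g i j0 * c)"
  have r0: "0 < r i j0" using r_pos[OF j0] .
  have t1p: "0 < t1" unfolding t1_def using r0 Dp[of j0] g_pos[of i j0] c by simp
  have u: "t1 * g i j0 / D y q i j0 = r i j0 / c"
    unfolding t1_def using Dp[of j0] g_pos[of i j0] c by (simp add: field_simps)
  have "r i j0 / (r i j0 / c) \<le> r i j0 / ln (1 + r i j0 / c)"
  proof -
    have "0 < r i j0 / c" using r0 c by simp
    then have "0 < ln (1 + r i j0 / c)" by (intro ln_gt_zero) simp
    moreover have "ln (1 + r i j0 / c) \<le> r i j0 / c" using r0 c by (intro ln_add_one_self_le_self) simp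
    ultimately show ?thesis using r0 c
      by (intro divide_left_mono) (auto intro!: mult_pos_pos)
  qed
  also have "\<dots> \<le> G y q i t1" unfolding G_def u[symmetric]
  proof (rule member_le_sum[OF j0 _ J_fin])
    fix j assume j: "j \<in> J i - {j0}"
    have "0 < t1 * g i j / D y q i j" using t1p g_pos[of i j] Dp[of j] by simp
    then show "0 \<le> r i j / ln (1 + t1 * g i j / D y q i j)" using r_pos[of j i] j
      by (intro divide_nonneg_nonneg) auto
  qed
  finally have G1: "c \<le> G y q i t1" using r0 c by simp
  define R where "R = (\<Sum>j\<in>J i. r i j)"
  have Rp: "0 < R" unfolding R_def using r_pos by (intro sum_pos[OF J_fin J_ne])
  define E where "E = exp (R / c) - 1"
  have Ep: "0 < E" unfolding E_def using Rp c by simp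
  define t2 where "t2 = (\<Sum>j\<in>J i. E * D y q i j / g i j) + t1"
  have t12: "t1 \<le> t2" unfolding t2_def using Ep Dp g_pos
    by (simp add: sum_nonneg less_imp_le)
  have G2: "G y q i t2 \<le> c"
  proof -
    have "G y q i t2 \<le> (\<Sum>j\<in>J i. r i j / (R / c))" unfolding G_def
    proof (rule sum_mono)
      fix j assume j: "j \<in> J i"
      have "E * D y q i j / g i j \<le> t2" unfolding t2_def
        using member_le_sum[OF j, of "\<lambda>j. E * D y q i j / g i j"] Ep Dp g_pos J_fin t1p
        by (simp add: less_imp_le)
      hence "E \<le> t2 * g i j / D y q i j" using Dp[of j] g_pos[of i j] by (simp add: field_simps)
      hence "ln (1 + E) \<le> ln (1 + t2 * g i j / D y q i j)" using Ep by simp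
      moreover have "ln (1 + E) = R / c" unfolding E_def by simp
      moreover have "0 < R / c" using Rp c by simp
      ultimately show "r i j / ln (1 + t2 * g i j / D y q i j) \<le> r i j / (R / c)"
        using r_pos[OF j] by (intro divide_left_mono) (auto intro!: mult_pos_pos simp del: times_divide_eq_left times_divide_eq_right)
    qed
    also have "\<dots> = c" unfolding sum_divide_distrib[symmetric] R_def[symmetric] using Rp c by simp
    finally show ?thesis .
  qed
  obtain t where "t1 \<le> t" "t \<le> t2" "G y q i t = c"
    using IVT2'[of "G y q i" t2 c t1, OF G2 G1 t12 G_cont[OF t1p Dp]] by blast
  then show ?thesis using t1p by (intro exI[of _ t]) auto
qed

definition h :: "real^'n \<Rightarrow> real^'n \<Rightarrow> real^'n" where
  "h y q = (\<chi> i. THE t. 0 < t \<and> G y q i t = y$i)"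

lemma h_spec:
  assumes "\<forall>k. 0 < y$k" "\<forall>k. 0 \<le> q$k"
  shows "0 < h y q $ i \<and> G y q i (h y q $ i) = y$i"
proof -
  have Dp: "\<And>j. 0 < D y q i j" using D_pos assms by (simp add: less_imp_le)
  obtain t where t: "0 < t" "G y q i t = y$i" using G_exists[OF _ Dp] assms by blast
  have "(THE t. 0 < t \<and> G y q i t = y$i) = t"
  proof (rule the_equality)
    fix t' assume t': "0 < t' \<and> G y q i t' = y$i"
    show "t' = t"
    proof (rule ccontr)
      assume "t' \<noteq> t"
      then consider "t' < t" | "t < t'" by linarith
      then show False using G_strict[OF _ _ Dp] t t' by cases fastforce+
    qed
  qed (use t in auto)
  then show ?thesis using t by (simp add: h_def)
qed

lemma h_mono:
  assumes y: "\<forall>k. 0 < y$k" and q: "\<forall>k. 0 \<le> q$k" and qq: "\<forall>k. q$k \<le> q'$k"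
  shows "h y q $ i \<le> h y q' $ i"
proof (rule ccontr)
  assume "\<not> ?thesis"
  hence lt: "h y q' $ i < h y q $ i" by simp
  have q': "\<forall>k. 0 \<le> q'$k" using q qq order_trans by blast
  have yn: "\<forall>k. 0 \<le> y$k" using y by (simp add: less_imp_le)
  have s1: "0 < h y q $ i \<and> G y q i (h y q $ i) = y$i" by (rule h_spec[OF y q])
  have s2: "0 < h y q' $ i \<and> G y q' i (h y q' $ i) = y$i" by (rule h_spec[OF y q'])
  have "G y q i (h y q $ i) \<le> G y q' i (h y q $ i)"
    using G_mono_q[OF _ yn q qq] s1 by blast
  moreover have "G y q' i (h y q $ i) < G y q' i (h y q' $ i)"
    using G_strict[OF _ lt] s2 D_pos[OF yn q'] by blast
  ultimately show False using s1 s2 by linarith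
qed

lemma fixpoint:
  assumes y: "\<forall>k. 0 < y$k" and P: "\<forall>k. 0 \<le> P$k" and hP: "\<forall>k. h y P $ k \<le> P$k"
  shows "\<exists>q. (\<forall>k. 0 < q$k) \<and> h y q = q"
proof -
  define S where "S = {q. (\<forall>k. 0 \<le> q$k \<and> q$k \<le> P$k) \<and> (\<forall>k. q$k \<le> h y q $ k)}"
  define z where "z = (\<chi> k. Sup ((\<lambda>q. q$k) ` S))"
  have hpos: "\<forall>k. 0 \<le> q$k \<Longrightarrow> 0 < h y q $ k" for q k using h_spec[OF y] by blast
  have "0 \<in> S" unfolding S_def using P hpos by (auto simp: less_imp_le)
  hence Sne: "S \<noteq> {}" by blast
  have bdd: "bdd_above ((\<lambda>q. q$k) ` S)" for k
    unfolding S_def by (rule bdd_aboveI[of _ "P$k"]) auto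
  have up: "q \<in> S \<Longrightarrow> q$k \<le> z$k" for q k
    unfolding z_def by (simp, rule cSup_upper[OF _ bdd]) auto
  have zP: "z$k \<le> P$k" for k
    unfolding z_def using Sne by (simp, intro cSup_least) (auto simp: S_def)
  have z0: "0 \<le> z$k" for k using up[OF \<open>0 \<in> S\<close>, of k] by simp
  have zh: "z$k \<le> h y z $ k" for k
    unfolding z_def
  proof (simp, intro cSup_least)
    show "(\<lambda>q. q$k) ` S \<noteq> {}" using Sne by blast
    fix a assume "a \<in> (\<lambda>q. q$k) ` S"
    then obtain q where q: "q \<in> S" "a = q$k" by blast
    have "q$k \<le> h y q $ k" using q(1) unfolding S_def by blast
    also have "\<dots> \<le> h y z $ k"
      using h_mono[OF y, of q z] q(1) up unfolding S_def by blast
    also have "\<dots> = h y (\<chi> k. Sup ((\<lambda>q. q$k) ` S)) $ k" by (simp add: z_def)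
    finally show "a \<le> h y (\<chi> k. Sup ((\<lambda>q. q$k) ` S)) $ k" using q by simp
  qed
  define w where "w = h y z"
  have w0: "0 < w$k" for k unfolding w_def using hpos z0 by blast
  have wP: "w$k \<le> P$k" for k
    using h_mono[OF y, of z P k] z0 zP hP unfolding w_def by (meson order_trans)
  have ww: "w$k \<le> h y w $ k" for k
    using h_mono[OF y, of z w k] z0 zh unfolding w_def by blast
  have "w \<in> S" unfolding S_def using w0 wP ww by (simp add: less_imp_le)
  hence "w$k \<le> z$k" for k by (rule up)
  hence "w = z" using zh unfolding w_def by (simp add: vec_eq_iff order_antisym)
  then show ?thesis using w0 unfolding w_def by metis
qed

lemma Gy_cont:
  assumes P: "\<forall>k. 0 < P$k"
  shows "continuous_on {y. \<forall>k. 0 < y$k} (\<lambda>y. G y P i (P$i))"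
  unfolding G_def D_def
proof (intro continuous_intros ballI)
  fix j and y :: "real^'n" assume y: "y \<in> {y. \<forall>k. 0 < y$k}"
  have Dp: "0 < D y P i j" using D_pos y P by (simp add: less_imp_le)
  then have p: "0 < P$i * g i j / D y P i j" using P g_pos[of i j] by simp
  show "(\<Sum>k\<in>UNIV-{i}. P$k * g k j * y$k) + s \<noteq> 0" using Dp by (simp add: D_def)
  show "1 + P$i * g i j / ((\<Sum>k\<in>UNIV-{i}. P$k * g k j * y$k) + s) \<noteq> 0"
    using p by (simp add: D_def)
  have "0 < ln (1 + P$i * g i j / D y P i j)" using p by simp
  then show "ln (1 + P$i * g i j / ((\<Sum>k\<in>UNIV-{i}. P$k * g k j * y$k) + s)) \<noteq> 0"
    by (simp add: D_def)
qed

lemma local_open: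
  assumes y0: "\<forall>k. 0 \<le> y0$k" and p0: "\<forall>k. 0 < p0$k"
    and fix0: "y0 = load_map J g s y0 r p0"
  shows "\<exists>U. open U \<and> y0 \<in> U \<and> (\<forall>y\<in>U. implementable J g s r y)"
proof -
  have p0n: "\<forall>k. 0 \<le> p0$k" using p0 by (simp add: less_imp_le)
  have y0i: "y0$i = G y0 p0 i (p0$i)" for i using fix0 load_map_G by (metis (no_types))
  have y0p: "\<forall>k. 0 < y0$k" using y0i G_pos p0 D_pos[OF y0 p0n] by simp
  define P where "P = (\<chi> k. 2 * p0$k)"
  have P: "\<forall>k. 0 < P$k" unfolding P_def using p0 by simp
  have Pn: "\<forall>k. 0 \<le> P$k" using P by (simp add: less_imp_le)
  have strict: "G y0 P i (P$i) < y0$i" for i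
    unfolding y0i G_def
  proof (rule sum_strict_mono[OF J_fin J_ne])
    fix j assume j: "j \<in> J i"
    define A where "A = (\<Sum>k\<in>UNIV-{i}. p0$k * g k j * y0$k)"
    have A0: "0 \<le> A" unfolding A_def using p0n y0 g_pos
      by (intro sum_nonneg mult_nonneg_nonneg) (auto simp: less_imp_le)
    have DP: "D y0 P i j = 2 * A + s" unfolding D_def A_def P_def
      by (simp add: sum_distrib_left mult.assoc)
    have D0: "D y0 p0 i j = A + s" unfolding D_def A_def by simp
    have gp: "0 < p0$i * g i j" using p0 g_pos[of i j] by simp
    have "p0$i * g i j / (A + s) < P$i * g i j / (2 * A + s)"
      unfolding P_def using gp A0 s_pos by (simp add: field_simps)
    then show "r i j / ln (1 + P$i * g i j / D y0 P i j) < r i j / ln (1 + p0$i * g i j / D y0 p0 i j)"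
      unfolding DP D0 using r_pos[OF j] gp A0 s_pos by (intro term_dec) auto
  qed
  define S where "S = {y::real^'n. \<forall>k. 0 < y$k}"
  define f where "f = (\<lambda>y. \<chi> i. y$i - G y P i (P$i))"
  define U where "U = S \<inter> f -` S"
  have Sopen: "open S"
  proof -
    have "S = (\<Inter>k\<in>UNIV. {y. y$k > 0})" unfolding S_def by auto
    then show ?thesis by (auto intro!: open_INT open_halfspace_component_gt_cart)
  qed
  have fc: "continuous_on S f" unfolding f_def S_def
    by (intro continuous_on_vec_lambda continuous_intros Gy_cont[OF P])
  have "open U" unfolding U_def by (rule continuous_open_preimage[OF fc Sopen Sopen])
  moreover have "y0 \<in> U" unfolding U_def S_def f_def using y0p strict by simp
  moreover have "implementable J g s r y" if yU: "y \<in> U" for y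
  proof -
    have yp: "\<forall>k. 0 < y$k" and lt: "\<forall>k. G y P k (P$k) < y$k"
      using yU unfolding U_def S_def f_def by auto
    have yn: "\<forall>k. 0 \<le> y$k" using yp by (simp add: less_imp_le)
    have hP: "\<forall>k. h y P $ k \<le> P$k"
    proof
      fix k
      show "h y P $ k \<le> P$k"
      proof (rule ccontr)
        assume "\<not> ?thesis"
        hence "P$k \<le> h y P $ k" by simp
        hence "G y P k (h y P $ k) \<le> G y P k (P$k)"
          using G_anti P D_pos[OF yn Pn] by blast
        then show False using h_spec[OF yp Pn, of k] lt[rule_format, of k] by simp
      qed
    qed
    obtain q where q: "\<forall>k. 0 < q$k" "h y q = q" using fixpoint[OF yp Pn hP] by blast
    have "y$i = load_map J g s y r q $ i" for i
      using h_spec[OF yp, of q i] q by (simp add: less_imp_le load_map_G)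
    hence "y = load_map J g s y r q" by (simp add: vec_eq_iff)
    then show ?thesis unfolding implementable_def using yn q by blast
  qed
  ultimately show ?thesis by blast
qed

end

theorem theorem4:
  fixes J :: "'n::finite \<Rightarrow> 'u set" and g r :: "'n \<Rightarrow> 'u \<Rightarrow> real"
    and sigma2 :: real and x p :: "real^'n"
  assumes J_fin: "\<And>i. finite (J i)"
    and J_ne: "\<And>i. J i \<noteq> {}"
    and J_disj: "\<And>i i'. i \<noteq> i' \<Longrightarrow> J i \<inter> J i' = {}"
    and g_pos: "\<And>k j. 0 < g k j"
    and sigma_pos: "0 < sigma2"
    and r_pos: "\<And>i j. j \<in> J i \<Longrightarrow> 0 < r i j"
    and r_sat: "satisfiable J g r"
    and x_nonneg: "\<And>i. 0 \<le> x $ i"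
    and p_pos: "\<And>i. 0 < p $ i"
    and x_fix: "x = load_map J g sigma2 x r p"
  shows "(\<forall>N. is_norm N \<longrightarrow> (\<exists>\<delta>>0. \<forall>x'. N (x' - x) \<le> \<delta> \<longrightarrow> implementable J g sigma2 r x'))
     \<and> open {y. implementable J g sigma2 r y}"
proof -
  interpret net J g r sigma2
    by unfold_locales (use J_fin J_ne g_pos sigma_pos r_pos in auto)
  have part2: "open {y. implementable J g sigma2 r y}"
  proof (subst open_subopen, intro ballI)
    fix y assume "y \<in> {y. implementable J g sigma2 r y}"
    then obtain q where "\<forall>k. 0 \<le> y$k" "\<forall>k. 0 < q$k" "y = load_map J g sigma2 y r q"
      unfolding implementable_def by blast
    from local_open[OF this] show "\<exists>T. open T \<and> y \<in> T \<and> T \<subseteq> {y. implementable J g sigma2 r y}"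
      by blast
  qed
  have part1: "\<exists>\<delta>>0. \<forall>x'. N (x' - x) \<le> \<delta> \<longrightarrow> implementable J g sigma2 r x'"
    if N: "is_norm N" for N
  proof -
    obtain U where U: "open U" "x \<in> U" "\<forall>y\<in>U. implementable J g sigma2 r y"
      using local_open[of x p] x_nonneg p_pos x_fix by blast
    obtain e where e: "e > 0" "ball x e \<subseteq> U" using U(1,2) open_contains_ball by blast
    obtain m where m: "m > 0" "\<And>v. m * norm v \<le> N v" using is_norm_lower[OF N] by blast
    show ?thesis
    proof (intro exI[of _ "m * e / 2"] conjI allI impI)
      show "0 < m * e / 2" using m e by simp
      fix x' assume "N (x' - x) \<le> m * e / 2"
      with m(2)[of "x' - x"] have "m * norm (x' - x) \<le> m * (e / 2)" by simp
      hence "norm (x' - x) \<le> e / 2" using m(1) by simp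
      hence "x' \<in> ball x e" using e(1) by (simp add: dist_norm norm_minus_commute)
      then show "implementable J g sigma2 r x'" using e U(3) by blast
    qed
  qed
  show ?thesis using part1 part2 by blast
qed

end
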